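(* For $\gamma\in(1,2)$ let $C_\zeta(\gamma)=(\sum_{j=1}^\infty j^{-\gamma})^{-1}$ and define the probability distribution $\{\mathrm{p}_j\}_{j=1}^\infty$ on $\mathbb{N}$ by $\mathrm{p}_{2j-1}=\mathrm{p}_{2j}=\tfrac12 C_\zeta(\gamma)j^{-\gamma}$. Fix $\theta\in\mathbb{N}$ and let $X_1,\dots,X_\theta$ be i.i.d. with this distribution. Let $S$ be the random set of values of $X_1,\dots,X_\theta$, enumerated as $S=\{Z_1,\dots,Z_N\}$ with $Z_1<\dots<Z_N$ (so $N\leq\theta$ is the number of distinct values). Set $c_1=(1-e^{-C_\zeta(\gamma)})/2$ and $c_2=C_\zeta(\gamma)/(\gamma-1)$. Then (i) $\mathbb{P}(N\geq c_1\theta^{1/\gamma})\geq 1-c_1^{-2}\theta^{-(2/\gamma-1)}$; (ii) $\mathbb{P}(\max S\leq n)\geq 1-c_2\,\theta\lfloor n/2\rfloor^{1-\gamma}$ for all $n\in\mathbb{N}$; (iii) $\mathbb{P}\big(\sum_{j=1}^{N-1}\chi_{\{Z_{j+1}-Z_j\text{ odd}\}}\leq n/5\,\big|\,N=n\big)\leq e^{-n/100}$ for all integers $n$ with $10\leq n\leq\theta$.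
   Context: $\chi_E$ denotes the indicator of the event $E$. *)

theory Defs
  imports "HOL-Probability.Probability"
begin

definition Czeta :: "real \<Rightarrow> real" where
  "Czeta \<gamma> = inverse (\<Sum>j. real (Suc j) powr (- \<gamma>))"

text \<open>p_{2j-1} = p_{2j} = C_zeta(gamma) j^(-gamma) / 2 for j >= 1; p_0 = 0 (0 is not in the support).\<close>
definition pj :: "real \<Rightarrow> nat \<Rightarrow> real" where
  "pj \<gamma> k = (if k = 0 then 0 else Czeta \<gamma> / 2 * real ((k + 1) div 2) powr (- \<gamma>))"

definition zdist :: "real \<Rightarrow> nat pmf" where
  "zdist \<gamma> = embed_pmf (pj \<gamma>)"

text \<open>Joint law of X_1..X_theta i.i.d. (indexed by 0..theta-1).\<close>
definition sample :: "real \<Rightarrow> nat \<Rightarrow> (nat \<Rightarrow> nat) pmf" where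
  "sample \<gamma> \<theta> = Pi_pmf {..<\<theta>} 0 (\<lambda>_. zdist \<gamma>)"

definition valset :: "nat \<Rightarrow> (nat \<Rightarrow> nat) \<Rightarrow> nat set" where
  "valset \<theta> X = X ` {..<\<theta>}"

definition Nval :: "nat \<Rightarrow> (nat \<Rightarrow> nat) \<Rightarrow> nat" where
  "Nval \<theta> X = card (valset \<theta> X)"

text \<open>Z_1 < ... < Z_N is sorted_list_of_set (valset), 0-indexed; count of j in 1..N-1 with Z_{j+1}-Z_j odd.\<close>
definition oddgaps :: "nat \<Rightarrow> (nat \<Rightarrow> nat) \<Rightarrow> nat" where
  "oddgaps \<theta> X = (let zs = sorted_list_of_set (valset \<theta> X) in
      card {j. j + 1 < length zs \<and> odd (zs ! (j + 1) - zs ! j)})"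

end

theory Submission
  imports Defs
begin


context
  fixes \<gamma> :: real
  assumes g1: "1 < \<gamma>"
begin

definition zeta :: real where "zeta = (\<Sum>j. real (Suc j) powr (- \<gamma>))"

lemma zeta_summable: "summable (\<lambda>j. real (Suc j) powr (- \<gamma>))"
proof -
  have "summable (\<lambda>n. real n powr (- \<gamma>))" using g1 by (simp add: summable_real_powr_iff)
  then show ?thesis using summable_iff_shift[of "\<lambda>n. real n powr (- \<gamma>)" 1] by simp
qed

lemma zeta_sums: "(\<lambda>j. real (Suc j) powr (- \<gamma>)) sums zeta"
  using zeta_summable unfolding zeta_def by (simp add: summable_sums)

lemma zeta_ge1: "zeta \<ge> 1"
proof -
  have "(\<Sum>j<1. real (Suc j) powr (- \<gamma>)) \<le> zeta"
    unfolding zeta_def by (rule sum_le_suminf[OF zeta_summable]) auto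
  then show ?thesis by simp
qed

lemma C_eq: "Czeta \<gamma> = 1 / zeta"
  unfolding Czeta_def zeta_def by (simp add: inverse_eq_divide)

lemma C_pos: "Czeta \<gamma> > 0" using zeta_ge1 C_eq by simp
lemma C_le1: "Czeta \<gamma> \<le> 1" using zeta_ge1 C_eq by simp
lemma C_zeta: "Czeta \<gamma> * zeta = 1" using zeta_ge1 C_eq by simp

lemma pj_nonneg: "pj \<gamma> k \<ge> 0"
  unfolding pj_def using C_pos by auto

lemma pj_sums: "pj \<gamma> sums 1"
proof -
  define g where "g = (\<lambda>i. Czeta \<gamma> / 2 * real (Suc i) powr (- \<gamma>))"
  define f where "f = (\<lambda>i. if i = 0 then 0 else Czeta \<gamma> / 2 * real i powr (- \<gamma>))"
  have gs: "g sums (Czeta \<gamma> / 2 * zeta)"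
    unfolding g_def by (rule sums_mult[OF zeta_sums])
  have fs: "f sums (Czeta \<gamma> / 2 * zeta)"
    using gs sums_Suc_iff[of f "Czeta \<gamma> / 2 * zeta"] by (simp add: f_def g_def)
  have "(\<lambda>n. if even n then f (n div 2) else g ((n - 1) div 2)) sums
        (Czeta \<gamma> / 2 * zeta + Czeta \<gamma> / 2 * zeta)"
    by (rule sums_if[OF gs fs])
  moreover have "(\<lambda>n. if even n then f (n div 2) else g ((n - 1) div 2)) = pj \<gamma>"
  proof
    fix n :: nat
    show "(if even n then f (n div 2) else g ((n - 1) div 2)) = pj \<gamma> n"
    proof (cases "even n")
      case True
      then have "(n + 1) div 2 = n div 2" by presburger
      then show ?thesis using True by (auto simp: f_def pj_def)
    next
      case False
      then have "(n + 1) div 2 = Suc ((n - 1) div 2)" by presburger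
      then show ?thesis using False by (auto simp: g_def pj_def)
    qed
  qed
  ultimately show ?thesis using C_zeta by simp
qed

lemma pmf_zdist: "pmf (zdist \<gamma>) k = pj \<gamma> k"
  unfolding zdist_def
proof (rule pmf_embed_pmf)
  show "0 \<le> pj \<gamma> x" for x by (rule pj_nonneg)
  have "(\<Sum>i. ennreal (pj \<gamma> i)) = ennreal (\<Sum>i. pj \<gamma> i)"
    by (rule suminf_ennreal2[OF pj_nonneg sums_summable[OF pj_sums]])
  then show "(\<integral>\<^sup>+ x. ennreal (pj \<gamma> x) \<partial>count_space UNIV) = 1"
    using pj_sums by (simp add: nn_integral_count_space_nat sums_iff)
qed

end


lemma powr_step:
  fixes \<gamma> x :: real
  assumes g1: "1 < \<gamma>" and x: "1 \<le> x"
  shows "(x + 1) powr (- \<gamma>) \<le> (x powr (1 - \<gamma>) - (x + 1) powr (1 - \<gamma>)) / (\<gamma> - 1)"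
proof -
  have "\<exists>z>x. z < x + 1 \<and> (x + 1) powr (1 - \<gamma>) - x powr (1 - \<gamma>) = ((x + 1) - x) * ((1 - \<gamma>) * z powr (1 - \<gamma> - 1))"
  proof (rule MVT2)
    fix y assume "x \<le> y" "y \<le> x + 1"
    then have "y > 0" using x by auto
    then show "((\<lambda>a. a powr (1 - \<gamma>)) has_real_derivative (1 - \<gamma>) * y powr (1 - \<gamma> - 1)) (at y)"
      by (rule has_real_derivative_powr)
  qed simp
  then obtain z where z: "x < z" "z < x + 1"
    and eq: "(x + 1) powr (1 - \<gamma>) - x powr (1 - \<gamma>) = (1 - \<gamma>) * z powr (- \<gamma>)" by auto
  have "(x + 1) powr (- \<gamma>) \<le> z powr (- \<gamma>)"
    by (rule powr_mono2') (use g1 x z in auto)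
  then have "(\<gamma> - 1) * (x + 1) powr (- \<gamma>) \<le> (\<gamma> - 1) * z powr (- \<gamma>)"
    using g1 by (intro mult_left_mono) auto
  also have "\<dots> = x powr (1 - \<gamma>) - (x + 1) powr (1 - \<gamma>)" using eq by (simp add: algebra_simps)
  finally show ?thesis using g1 by (simp add: pos_le_divide_eq mult.commute)
qed

context
  fixes \<gamma> :: real
  assumes g1: "1 < \<gamma>"
begin

lemma tail_bound:
  assumes m: "1 \<le> m"
  shows "(\<Sum>j. real (Suc (j + m)) powr (- \<gamma>)) \<le> real m powr (1 - \<gamma>) / (\<gamma> - 1)"
proof -
  define f where "f = (\<lambda>j. real (j + m) powr (1 - \<gamma>) / (\<gamma> - 1))"
  have lim: "f \<longlonglongrightarrow> 0"
  proof -
    have "filterlim (\<lambda>j. real (j + m)) at_top sequentially"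
      by real_asymp
    then have "(\<lambda>j. real (j + m) powr (1 - \<gamma>)) \<longlonglongrightarrow> 0"
      using g1 by (intro tendsto_neg_powr) auto
    then show ?thesis unfolding f_def by (auto intro: tendsto_divide_zero)
  qed
  have ts: "(\<lambda>j. f j - f (Suc j)) sums (f 0 - 0)" by (rule telescope_sums'[OF lim])
  have le: "real (Suc (j + m)) powr (- \<gamma>) \<le> f j - f (Suc j)" for j
  proof -
    have "(real (j + m) + 1) powr (- \<gamma>) \<le> (real (j+m) powr (1 - \<gamma>) - (real (j+m) + 1) powr (1 - \<gamma>)) / (\<gamma> - 1)"
      by (rule powr_step) (use g1 m in auto)
    then show ?thesis unfolding f_def by (simp add: diff_divide_distrib add.commute)
  qed
  have sm: "summable (\<lambda>j. real (Suc (j + m)) powr (- \<gamma>))"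
    using zeta_summable[OF g1] summable_iff_shift[of "\<lambda>j. real (Suc j) powr (- \<gamma>)" m] by simp
  have "(\<Sum>j. real (Suc (j + m)) powr (- \<gamma>)) \<le> (\<Sum>j. f j - f (Suc j))"
    by (rule suminf_le[OF le sm sums_summable[OF ts]])
  also have "\<dots> = f 0" using ts by (simp add: sums_iff)
  finally show ?thesis by (simp add: f_def)
qed

lemma zeta_split: "zeta \<gamma> = (\<Sum>j<m. real (Suc j) powr (- \<gamma>)) + (\<Sum>j. real (Suc (j + m)) powr (- \<gamma>))"
  using suminf_split_initial_segment[OF zeta_summable[OF g1], of m] unfolding zeta_def[OF g1]
  by simp

lemma zdist_atMost_even: "measure_pmf.prob (zdist \<gamma>) {..2*m} = Czeta \<gamma> * (\<Sum>j<m. real (Suc j) powr (- \<gamma>))"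
proof (induction m)
  case 0
  then show ?case by (simp add: measure_measure_pmf_finite pmf_zdist[OF g1] pj_def)
next
  case (Suc m)
  have "{..2 * Suc m} = insert (2*m+2) (insert (2*m+1) {..2*m})" by auto
  then have "measure_pmf.prob (zdist \<gamma>) {..2 * Suc m} = pj \<gamma> (2*m+2) + pj \<gamma> (2*m+1) + measure_pmf.prob (zdist \<gamma>) {..2*m}"
    by (simp add: measure_measure_pmf_finite pmf_zdist[OF g1])
  also have "pj \<gamma> (2*m+2) = Czeta \<gamma> / 2 * real (Suc m) powr (- \<gamma>)"
    unfolding pj_def by simp
  also have "pj \<gamma> (2*m+1) = Czeta \<gamma> / 2 * real (Suc m) powr (- \<gamma>)"
    unfolding pj_def by simp
  finally show ?case using Suc by (simp add: algebra_simps)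
qed

lemma zdist_tail:
  assumes n: "2 \<le> n"
  shows "measure_pmf.prob (zdist \<gamma>) {k. n < k} \<le> Czeta \<gamma> / (\<gamma> - 1) * real (n div 2) powr (1 - \<gamma>)"
proof -
  define m where "m = n div 2"
  have m1: "1 \<le> m" using n by (simp add: m_def)
  have "{k. n < k} \<subseteq> - {..2*m}" unfolding m_def by auto
  then have "measure_pmf.prob (zdist \<gamma>) {k. n < k} \<le> measure_pmf.prob (zdist \<gamma>) (- {..2*m})"
    by (rule measure_pmf.finite_measure_mono) auto
  also have "\<dots> = 1 - measure_pmf.prob (zdist \<gamma>) {..2*m}"
    using measure_pmf.prob_compl[of "{..2*m}" "zdist \<gamma>"] by (simp add: Compl_eq_Diff_UNIV)
  also have "\<dots> = Czeta \<gamma> * (\<Sum>j. real (Suc (j + m)) powr (- \<gamma>))"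
    using zeta_split[of m] C_zeta[OF g1] zdist_atMost_even[of m] by (simp add: algebra_simps)
  also have "\<dots> \<le> Czeta \<gamma> * (real m powr (1 - \<gamma>) / (\<gamma> - 1))"
    using tail_bound[OF m1] C_pos[OF g1] by (intro mult_left_mono) auto
  finally show ?thesis by (simp add: m_def)
qed

end


lemma sample_component:
  assumes "i < \<theta>"
  shows "map_pmf (\<lambda>X. X i) (sample \<gamma> \<theta>) = zdist \<gamma>"
  unfolding sample_def using assms by (simp add: Pi_pmf_component)

lemma sample_prob_component:
  assumes "i < \<theta>"
  shows "measure_pmf.prob (sample \<gamma> \<theta>) {X. X i \<in> A} = measure_pmf.prob (zdist \<gamma>) A"
proof -
  have "measure_pmf.prob (sample \<gamma> \<theta>) {X. X i \<in> A} = measure_pmf.prob (map_pmf (\<lambda>X. X i) (sample \<gamma> \<theta>)) A"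
    by (simp add: measure_map_pmf vimage_def)
  then show ?thesis using sample_component[OF assms] by simp
qed

lemma prob_some_large:
  assumes g1: "1 < \<gamma>" and n: "2 \<le> n"
  shows "measure_pmf.prob (sample \<gamma> \<theta>) {X. \<exists>i<\<theta>. n < X i}
     \<le> real \<theta> * (Czeta \<gamma> / (\<gamma> - 1) * real (n div 2) powr (1 - \<gamma>))"
proof -
  have "{X. \<exists>i<\<theta>. n < X i} = (\<Union>i\<in>{..<\<theta>}. {X. X i \<in> {k. n < k}})" by auto
  then have "measure_pmf.prob (sample \<gamma> \<theta>) {X. \<exists>i<\<theta>. n < X i}
     \<le> (\<Sum>i\<in>{..<\<theta>}. measure_pmf.prob (sample \<gamma> \<theta>) {X. X i \<in> {k. n < k}})"
    by (simp only:) (rule measure_pmf.finite_measure_subadditive_finite, auto)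
  also have "\<dots> = (\<Sum>i\<in>{..<\<theta>}. measure_pmf.prob (zdist \<gamma>) {k. n < k})"
    by (intro sum.cong refl sample_prob_component) auto
  also have "\<dots> \<le> (\<Sum>i\<in>{..<\<theta>}. Czeta \<gamma> / (\<gamma> - 1) * real (n div 2) powr (1 - \<gamma>))"
    by (intro sum_mono zdist_tail[OF g1 n])
  finally show ?thesis by simp
qed

lemma part2:
  assumes g1: "1 < \<gamma>" and th: "1 \<le> \<theta>" and n: "2 \<le> n"
  shows "measure_pmf.prob (sample \<gamma> \<theta>) {X. Max (valset \<theta> X) \<le> n}
     \<ge> 1 - Czeta \<gamma> / (\<gamma> - 1) * real \<theta> * real (n div 2) powr (1 - \<gamma>)"
proof -
  let ?P = "measure_pmf.prob (sample \<gamma> \<theta>)"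
  have "UNIV - {X. \<exists>i<\<theta>. n < X i} \<subseteq> {X. Max (valset \<theta> X) \<le> n}"
  proof
    fix X assume "X \<in> UNIV - {X. \<exists>i<\<theta>. n < X i}"
    then have "\<forall>i<\<theta>. X i \<le> n" by auto
    moreover have "valset \<theta> X \<noteq> {}" using th by (auto simp: valset_def lessThan_empty_iff)
    ultimately show "X \<in> {X. Max (valset \<theta> X) \<le> n}"
      by (auto simp: valset_def)
  qed
  then have "?P (UNIV - {X. \<exists>i<\<theta>. n < X i}) \<le> ?P {X. Max (valset \<theta> X) \<le> n}"
    by (intro measure_pmf.finite_measure_mono) auto
  moreover have "?P (UNIV - {X. \<exists>i<\<theta>. n < X i}) = 1 - ?P {X. \<exists>i<\<theta>. n < X i}"
    using measure_pmf.prob_compl[of "{X. \<exists>i<\<theta>. n < X i}" "sample \<gamma> \<theta>"] by simp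
  ultimately show ?thesis using prob_some_large[OF g1 n, of \<theta>] by (simp add: algebra_simps)
qed


lemma pmf_integrable_bounded:
  fixes f :: "'a \<Rightarrow> real"
  assumes "\<And>x. \<bar>f x\<bar> \<le> B"
  shows "integrable (measure_pmf p) f"
  by (rule measure_pmf.integrable_const_bound[where B=B]) (use assms in auto)

lemma pmf_integrable_indicator [simp]: "integrable (measure_pmf p) (indicator A :: 'a \<Rightarrow> real)"
  by (rule pmf_integrable_bounded[where B=1]) (auto simp: indicator_def)

lemma pmf_integral_indicator [simp]: "measure_pmf.expectation p (indicator A :: 'a \<Rightarrow> real) = measure_pmf.prob p A"
  by simp

lemma var_ind_sum:
  fixes p :: "'a pmf" and I :: "'b set" and A :: "'b \<Rightarrow> 'a set"
  assumes fin: "finite I"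
  defines "S \<equiv> \<lambda>x. \<Sum>k\<in>I. indicator (A k) x :: real"
  shows "measure_pmf.expectation p S = (\<Sum>k\<in>I. measure_pmf.prob p (A k))"
    and "measure_pmf.variance p S = (\<Sum>k\<in>I. \<Sum>l\<in>I. measure_pmf.prob p (A k \<inter> A l)
            - measure_pmf.prob p (A k) * measure_pmf.prob p (A l))"
proof -
  show E: "measure_pmf.expectation p S = (\<Sum>k\<in>I. measure_pmf.prob p (A k))"
    unfolding S_def by simp
  have sq: "(S x)\<^sup>2 = (\<Sum>k\<in>I. \<Sum>l\<in>I. indicator (A k \<inter> A l) x)" for x
    unfolding S_def power2_eq_square sum_product
    by (intro sum.cong refl) (auto simp: indicator_def)
  have intS: "integrable (measure_pmf p) S"
    unfolding S_def by (rule Bochner_Integration.integrable_sum) simp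
  have intS2: "integrable (measure_pmf p) (\<lambda>x. (S x)\<^sup>2)"
    unfolding sq by (rule Bochner_Integration.integrable_sum, rule Bochner_Integration.integrable_sum) simp
  have E2: "measure_pmf.expectation p (\<lambda>x. (S x)\<^sup>2) = (\<Sum>k\<in>I. \<Sum>l\<in>I. measure_pmf.prob p (A k \<inter> A l))"
    unfolding sq by simp
  have "measure_pmf.variance p S = measure_pmf.expectation p (\<lambda>x. (S x)\<^sup>2) - (measure_pmf.expectation p S)\<^sup>2"
    by (rule measure_pmf.variance_eq[OF intS intS2])
  also have "\<dots> = (\<Sum>k\<in>I. \<Sum>l\<in>I. measure_pmf.prob p (A k \<inter> A l)) - (\<Sum>k\<in>I. \<Sum>l\<in>I. measure_pmf.prob p (A k) * measure_pmf.prob p (A l))"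
    unfolding E2 E by (simp add: power2_eq_square sum_product)
  finally show "measure_pmf.variance p S = (\<Sum>k\<in>I. \<Sum>l\<in>I. measure_pmf.prob p (A k \<inter> A l)
            - measure_pmf.prob p (A k) * measure_pmf.prob p (A l))"
    by (simp add: sum_subtractf)
qed


lemma miss_prob:
  "measure_pmf.prob (sample \<gamma> \<theta>) {X. \<forall>i<\<theta>. X i \<notin> B} = (measure_pmf.prob (zdist \<gamma>) (- B)) ^ \<theta>"
proof -
  have "{X. \<forall>i<\<theta>. X i \<notin> B} = Pi {..<\<theta>} (\<lambda>_. - B)" by (auto simp: Pi_def)
  then show ?thesis unfolding sample_def by (simp add: measure_Pi_pmf_Pi)
qed

context
  fixes \<gamma> :: real
  assumes g1: "1 < \<gamma>"
begin

lemma pj_le_half: "pj \<gamma> k \<le> 1/2"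
proof -
  have "real ((k + 1) div 2) powr (- \<gamma>) \<le> 1" if "k > 0"
  proof -
    have "real ((k + 1) div 2) \<ge> 1" using that by auto
    then show ?thesis using g1 by (simp add: powr_le_one_le ge_one_powr_ge_zero powr_minus_divide)
  qed
  then show ?thesis unfolding pj_def using C_le1[OF g1] C_pos[OF g1]
    by (auto intro!: mult_le_one[where a="Czeta \<gamma>", THEN order.trans[rotated]] simp: mult_le_one)
qed

lemma zdist_compl1: "measure_pmf.prob (zdist \<gamma>) (- {k}) = 1 - pj \<gamma> k"
  using measure_pmf.prob_compl[of "{k}" "zdist \<gamma>"]
  by (simp add: Compl_eq_Diff_UNIV measure_measure_pmf_finite pmf_zdist[OF g1])

lemma zdist_compl2: "k \<noteq> l \<Longrightarrow> measure_pmf.prob (zdist \<gamma>) (- {k, l}) = 1 - pj \<gamma> k - pj \<gamma> l"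
  using measure_pmf.prob_compl[of "{k, l}" "zdist \<gamma>"]
  by (simp add: Compl_eq_Diff_UNIV measure_measure_pmf_finite pmf_zdist[OF g1])

end


context
  fixes \<gamma> :: real
  assumes g1: "1 < \<gamma>"
begin

lemma one_minus_pow_ge: 
  assumes "0 \<le> p" "p \<le> 1"
  shows "1 - exp (- (real \<theta> * p)) \<le> 1 - (1 - p) ^ \<theta>"
proof -
  have "(1 - p) ^ \<theta> \<le> exp (- p) ^ \<theta>"
    using assms by (intro power_mono) (auto simp: exp_ge_add_one_self[of "-p", simplified])
  also have "\<dots> = exp (- (real \<theta> * p))" by (simp flip: exp_of_nat_mult)
  finally show ?thesis by simp
qed

lemma mu_bound:
  assumes th: "1 \<le> \<theta>"
  defines "x \<equiv> real \<theta> powr (1/\<gamma>)"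
  defines "fl \<equiv> nat \<lfloor>x\<rfloor>"
  shows "(1 - exp (- Czeta \<gamma>)) * x \<le> (\<Sum>k\<in>{1..2*fl}. 1 - (1 - pj \<gamma> k) ^ \<theta>)"
proof -
  define C where "C = Czeta \<gamma>"
  have C0: "C > 0" using C_pos[OF g1] by (simp add: C_def)
  have x1: "x \<ge> 1" unfolding x_def using th g1 by (intro ge_one_powr_ge_zero) auto
  have fl1: "fl \<ge> 1" and flx: "real fl \<le> x" and xfl: "x < real fl + 1"
    unfolding fl_def using x1 by linarith+
  have pw: "x powr \<gamma> = real \<theta>" unfolding x_def using g1 by (simp add: powr_powr)
  have term1: "1 - exp (- (C/2)) \<le> 1 - (1 - pj \<gamma> k) ^ \<theta>" if k: "k \<in> {1..2*fl}" for k
  proof -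
    define j where "j = (k + 1) div 2"
    have j1: "1 \<le> j" and jfl: "j \<le> fl" using k unfolding j_def by auto
    have "real j powr \<gamma> \<le> x powr \<gamma>" using j1 jfl flx g1 by (intro powr_mono2) auto
    then have jle: "real j powr \<gamma> \<le> real \<theta>" using pw by simp
    have jpos: "real j powr \<gamma> > 0" using j1 by simp
    have "pj \<gamma> k = C / 2 / real j powr \<gamma>"
      using k by (simp add: pj_def C_def j_def powr_minus_divide)
    then have "real \<theta> * pj \<gamma> k = C / 2 * (real \<theta> / real j powr \<gamma>)" by simp
    moreover have "real \<theta> / real j powr \<gamma> \<ge> 1" using jle jpos by simp
    moreover have "C / 2 * 1 \<le> C / 2 * (real \<theta> / real j powr \<gamma>)"
      using C0 \<open>real \<theta> / real j powr \<gamma> \<ge> 1\<close> by (intro mult_left_mono) auto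
    ultimately have "real \<theta> * pj \<gamma> k \<ge> C / 2" by simp
    then have "1 - exp (- (C/2)) \<le> 1 - exp (- (real \<theta> * pj \<gamma> k))" by simp
    also have "\<dots> \<le> 1 - (1 - pj \<gamma> k) ^ \<theta>"
      by (rule one_minus_pow_ge) (use pj_nonneg[OF g1] pj_le_half[OF g1, of k] in auto)
    finally show ?thesis .
  qed
  have pj12: "pj \<gamma> k = C / 2" if "k \<in> {1, 2}" for k
    using that by (auto simp: pj_def C_def)
  show ?thesis
  proof (cases "\<theta> = 1")
    case True
    then have "x = 1" unfolding x_def by simp
    then have "fl = 1" unfolding fl_def by simp
    have "(\<Sum>k\<in>{1..2*fl}. 1 - (1 - pj \<gamma> k) ^ \<theta>) = C"
      using \<open>fl = 1\<close> True pj12[of 1] pj12[of 2] by (simp add: numeral_2_eq_2)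
    moreover have "1 - exp (- C) \<le> C" using exp_ge_add_one_self[of "-C"] by simp
    ultimately show ?thesis using \<open>x = 1\<close> by (simp add: C_def)
  next
    case False
    then have th2: "real \<theta> \<ge> 2" using th by simp
    define q where "q = exp (- (C/2))"
    have q0: "0 \<le> q" and q1: "q \<le> 1" unfolding q_def using C0 by auto
    have eC: "exp (- C) = q^2" unfolding q_def by (simp add: power2_eq_square flip: exp_add)
    have term2: "1 - q^2 \<le> 1 - (1 - pj \<gamma> k) ^ \<theta>" if "k \<in> {1, 2}" for k
    proof -
      have "C \<le> real \<theta> * (C/2)" using th2 C0 by simp
      moreover have "real \<theta> * pj \<gamma> k = real \<theta> * (C/2)" using pj12[OF that] by simp
      ultimately have "C \<le> real \<theta> * pj \<gamma> k" by linarith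
      then have "1 - exp (- C) \<le> 1 - exp (- (real \<theta> * pj \<gamma> k))" by simp
      also have "\<dots> \<le> 1 - (1 - pj \<gamma> k) ^ \<theta>"
        by (rule one_minus_pow_ge) (use pj_nonneg[OF g1] pj_le_half[OF g1, of k] in auto)
      finally show ?thesis using eC by simp
    qed
    have split: "{1..2*fl} = {1,2} \<union> {3..2*fl}" using fl1 by auto
    have e1: "(\<Sum>k\<in>{1..2*fl}. 1 - (1 - pj \<gamma> k) ^ \<theta>) =
          (\<Sum>k\<in>{1,2}. 1 - (1 - pj \<gamma> k) ^ \<theta>) + (\<Sum>k\<in>{3..2*fl}. 1 - (1 - pj \<gamma> k) ^ \<theta>)"
      unfolding split by (rule sum.union_disjoint) auto
    have e2: "(\<Sum>k\<in>{1,2}. 1 - (1 - pj \<gamma> k) ^ \<theta>) \<ge> (\<Sum>k\<in>{1,2::nat}. 1 - q^2)"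
      by (intro sum_mono term2)
    have e3: "(\<Sum>k\<in>{3..2*fl}. 1 - (1 - pj \<gamma> k) ^ \<theta>) \<ge> (\<Sum>k\<in>{3..2*fl}. 1 - q)"
      using term1 unfolding q_def by (intro sum_mono) auto
    have lb: "2 * (1 - q^2) + real (2*fl - 2) * (1 - q) \<le> (\<Sum>k\<in>{1..2*fl}. 1 - (1 - pj \<gamma> k) ^ \<theta>)"
      using e1 e2 e3 by simp
    have "0 \<le> (1 - q)^2" by simp
    then have "(1 - q^2) \<le> 2 * (1 - q)" by (simp add: power2_eq_square algebra_simps)
    then have "real (fl - 1) * (1 - q^2) \<le> real (fl - 1) * (2 * (1 - q))"
      by (intro mult_left_mono) auto
    also have "real (fl - 1) * (2 * (1 - q)) = real (2*fl - 2) * (1 - q)"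
      using fl1 by (simp add: of_nat_diff algebra_simps)
    finally have "real (fl - 1) * (1 - q^2) \<le> real (2*fl - 2) * (1 - q)" .
    then have "(real fl + 1) * (1 - q^2) \<le> 2 * (1 - q^2) + real (2*fl - 2) * (1 - q)"
      using fl1 by (simp add: of_nat_diff algebra_simps)
    moreover have "x * (1 - q^2) \<le> (real fl + 1) * (1 - q^2)"
      using xfl q0 q1 by (intro mult_right_mono) (auto simp: power_le_one)
    ultimately show ?thesis using lb eC by (simp add: C_def mult.commute)
  qed
qed

end


lemma double_sum_diag_bound:
  fixes f :: "'a \<Rightarrow> 'a \<Rightarrow> real"
  assumes "finite I" "\<And>k l. k \<in> I \<Longrightarrow> l \<in> I \<Longrightarrow> k \<noteq> l \<Longrightarrow> f k l \<le> 0"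
  shows "(\<Sum>k\<in>I. \<Sum>l\<in>I. f k l) \<le> (\<Sum>k\<in>I. f k k)"
proof (rule sum_mono)
  fix k assume k: "k \<in> I"
  have "(\<Sum>l\<in>I. f k l) = f k k + (\<Sum>l\<in>I - {k}. f k l)"
    using k assms(1) by (simp add: sum.remove)
  also have "(\<Sum>l\<in>I - {k}. f k l) \<le> 0" using assms k by (intro sum_nonpos) auto
  finally show "(\<Sum>l\<in>I. f k l) \<le> f k k" by simp
qed

context
  fixes \<gamma> :: real
  assumes g1: "1 < \<gamma>"
begin

lemma part1:
  assumes th: "1 \<le> \<theta>"
  defines "c1 \<equiv> (1 - exp (- Czeta \<gamma>)) / 2"
  shows "measure_pmf.prob (sample \<gamma> \<theta>) {X. real (Nval \<theta> X) \<ge> c1 * real \<theta> powr (1 / \<gamma>)}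
           \<ge> 1 - c1 powr (-2) * real \<theta> powr (- (2 / \<gamma> - 1))"
proof -
  define p where "p = sample \<gamma> \<theta>"
  define x where "x = real \<theta> powr (1/\<gamma>)"
  define fl where "fl = nat \<lfloor>x\<rfloor>"
  define I where "I = {1..2*fl}"
  define A where "A = (\<lambda>k::nat. {X::nat\<Rightarrow>nat. \<forall>i<\<theta>. X i \<notin> {k}})"
  define S where "S = (\<lambda>X. \<Sum>k\<in>I. indicator (A k) X :: real)"
  define Pk where "Pk = (\<lambda>k. (1 - pj \<gamma> k) ^ \<theta>)"
  define \<sigma> where "\<sigma> = (\<Sum>k\<in>I. Pk k)"
  define \<mu> where "\<mu> = (\<Sum>k\<in>I. 1 - Pk k)"
  define a where "a = c1 * x"
  have C0: "Czeta \<gamma> > 0" using C_pos[OF g1] .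
  have c1pos: "c1 > 0" unfolding c1_def using C0 by simp
  have c1le: "2 * c1 \<le> 1" unfolding c1_def by simp
  have x1: "x \<ge> 1" unfolding x_def using th g1 by (intro ge_one_powr_ge_zero) auto
  have xth: "x \<le> real \<theta>"
  proof -
    have "x \<le> real \<theta> powr 1" unfolding x_def using th g1 by (intro powr_mono) auto
    then show ?thesis using th by simp
  qed
  have apos: "a > 0" unfolding a_def using c1pos x1 by simp
  have finI: "finite I" unfolding I_def by simp
  have PA: "measure_pmf.prob p (A k) = Pk k" for k
    unfolding A_def p_def Pk_def using miss_prob[of \<gamma> \<theta> "{k}"] zdist_compl1[OF g1, of k] by simp
  have PAA: "measure_pmf.prob p (A k \<inter> A l) \<le> Pk k * Pk l" if "k \<noteq> l" for k l
  proof -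
    have "A k \<inter> A l = {X. \<forall>i<\<theta>. X i \<notin> {k, l}}" unfolding A_def by auto
    then have "measure_pmf.prob p (A k \<inter> A l) = (1 - pj \<gamma> k - pj \<gamma> l) ^ \<theta>"
      unfolding p_def using that miss_prob[of \<gamma> \<theta> "{k,l}"] zdist_compl2[OF g1, of k l] by simp
    also have "\<dots> \<le> ((1 - pj \<gamma> k) * (1 - pj \<gamma> l)) ^ \<theta>"
      using pj_nonneg[OF g1, of k] pj_nonneg[OF g1, of l] pj_le_half[OF g1, of k] pj_le_half[OF g1, of l]
      by (intro power_mono) (auto simp: algebra_simps)
    finally show ?thesis by (simp add: Pk_def power_mult_distrib)
  qed
  have Pk01: "0 \<le> Pk k" "Pk k \<le> 1" for k
    unfolding Pk_def using pj_nonneg[OF g1, of k] pj_le_half[OF g1, of k]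
    by (auto intro: power_le_one)
  have ES: "measure_pmf.expectation p S = \<sigma>"
    unfolding S_def \<sigma>_def using var_ind_sum(1)[OF finI, of p A] PA by simp
  have VS: "measure_pmf.variance p S = (\<Sum>k\<in>I. \<Sum>l\<in>I. measure_pmf.prob p (A k \<inter> A l) - Pk k * Pk l)"
    unfolding S_def using var_ind_sum(2)[OF finI, of p A] PA by simp
  have V_le: "measure_pmf.variance p S \<le> \<mu>"
  proof -
    have "measure_pmf.variance p S \<le> (\<Sum>k\<in>I. measure_pmf.prob p (A k \<inter> A k) - Pk k * Pk k)"
      unfolding VS by (rule double_sum_diag_bound[OF finI]) (use PAA in auto)
    also have "\<dots> = (\<Sum>k\<in>I. Pk k * (1 - Pk k))" using PA by (simp add: algebra_simps)
    also have "\<dots> \<le> (\<Sum>k\<in>I. 1 - Pk k)"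
      using Pk01 by (intro sum_mono) (simp add: mult_left_le_one_le)
    finally show ?thesis unfolding \<mu>_def .
  qed
  have mu2a: "2 * a \<le> \<mu>"
    using mu_bound[OF g1 th] unfolding \<mu>_def Pk_def a_def I_def fl_def x_def c1_def by simp
  define t where "t = \<mu> - a"
  have tpos: "t > 0" using mu2a apos unfolding t_def by simp
  have sub: "{X. real (Nval \<theta> X) < a} \<subseteq> {X \<in> space (measure_pmf p). \<bar>S X - \<sigma>\<bar> \<ge> t}"
  proof safe
    fix X assume N: "real (Nval \<theta> X) < a"
    have "card (I \<inter> valset \<theta> X) \<le> Nval \<theta> X"
      unfolding Nval_def valset_def by (intro card_mono) auto
    moreover have "real (card (I \<inter> valset \<theta> X)) = (\<Sum>k\<in>I. 1 - indicator (A k) X)"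
    proof -
      have "real (card (I \<inter> valset \<theta> X)) = (\<Sum>k\<in>I \<inter> valset \<theta> X. 1)" by simp
      also have "\<dots> = (\<Sum>k\<in>I. if k \<in> valset \<theta> X then 1 else 0)"
        using finI by (simp add: sum.If_cases Int_def)
      also have "\<dots> = (\<Sum>k\<in>I. 1 - indicator (A k) X)"
        by (intro sum.cong refl) (auto simp: A_def valset_def indicator_def)
      finally show ?thesis .
    qed
    moreover have "(\<Sum>k\<in>I. 1 - indicator (A k) X) = real (card I) - S X"
      unfolding S_def by (simp add: sum_subtractf)
    moreover have "\<mu> = real (card I) - \<sigma>" unfolding \<mu>_def \<sigma>_def by (simp add: sum_subtractf)
    ultimately have "S X - \<sigma> > t" using N unfolding t_def by linarith
    then show "t \<le> \<bar>S X - \<sigma>\<bar>" by simp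
  qed simp
  have "measure_pmf.prob p {X. real (Nval \<theta> X) < a} \<le> measure_pmf.prob p {X \<in> space (measure_pmf p). \<bar>S X - \<sigma>\<bar> \<ge> t}"
    by (rule measure_pmf.finite_measure_mono[OF sub]) simp
  also have "\<dots> \<le> measure_pmf.variance p S / t\<^sup>2"
  proof -
    have Sb: "0 \<le> S X \<and> S X \<le> real (card I)" for X
      unfolding S_def using sum_bounded_above[of I "\<lambda>k. indicator (A k) X :: real" 1]
      by (auto intro: sum_nonneg simp: indicator_def)
    have int2: "integrable (measure_pmf p) (\<lambda>x. (S x)\<^sup>2)"
    proof (rule pmf_integrable_bounded[where B="real (card I) ^ 2"])
      fix X show "\<bar>(S X)\<^sup>2\<bar> \<le> real (card I) ^ 2" using Sb[of X] by (simp add: power_mono)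
    qed
    show ?thesis using measure_pmf.Chebyshev_inequality[of S p t] int2 tpos ES by simp
  qed
  also have "\<dots> \<le> \<mu> / t\<^sup>2" using V_le tpos by (intro divide_right_mono) auto
  also have "\<dots> \<le> 2 / a"
  proof -
    have "(2 * \<mu> - a) * (\<mu> - 2 * a) \<ge> 0" using mu2a apos by (intro mult_nonneg_nonneg) auto
    then have "a * \<mu> \<le> 2 * t\<^sup>2" unfolding t_def by (simp add: power2_eq_square algebra_simps)
    then show ?thesis using apos tpos by (simp add: field_simps)
  qed
  finally have Pbad: "measure_pmf.prob p {X. real (Nval \<theta> X) < a} \<le> 2 / a" .
  have "measure_pmf.prob p {X. a \<le> real (Nval \<theta> X)} = 1 - measure_pmf.prob p {X. real (Nval \<theta> X) < a}"
  proof -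
    have "{X. a \<le> real (Nval \<theta> X)} = UNIV - {X. real (Nval \<theta> X) < a}" by auto
    then show ?thesis using measure_pmf.prob_compl[of "{X. real (Nval \<theta> X) < a}" p] by simp
  qed
  moreover have "2 / a \<le> c1 powr (-2) * real \<theta> powr (- (2 / \<gamma> - 1))"
  proof -
    have xx: "x * x = real \<theta> powr (2 / \<gamma>)" unfolding x_def by (simp flip: powr_add)
    have "real \<theta> powr (- (2 / \<gamma> - 1)) = real \<theta> powr 1 / real \<theta> powr (2 / \<gamma>)"
      using powr_diff[of "real \<theta>" 1 "2/\<gamma>"] th by simp
    also have "\<dots> = real \<theta> / (x * x)" using th xx by simp
    finally have e1: "real \<theta> powr (- (2 / \<gamma> - 1)) = real \<theta> / (x * x)" .
    have e2: "c1 powr (-2) = 1 / (c1 * c1)" using c1pos by (simp add: powr_minus power2_eq_square divide_inverse)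
    have "2 * c1 * x \<le> 1 * x" using c1le x1 by (intro mult_right_mono) auto
    then have "2 * c1 * x \<le> real \<theta>" using xth by simp
    then have "2 / a \<le> real \<theta> / (c1 * c1 * (x * x))"
      unfolding a_def using c1pos x1 by (simp add: field_simps)
    then show ?thesis unfolding e1 e2 by simp
  qed
  ultimately have "measure_pmf.prob p {X. a \<le> real (Nval \<theta> X)} \<ge> 1 - c1 powr (-2) * real \<theta> powr (- (2 / \<gamma> - 1))"
    using Pbad by linarith
  then show ?thesis unfolding a_def x_def p_def by simp
qed

end


definition cnt :: "('a \<Rightarrow> 'a \<Rightarrow> bool) \<Rightarrow> 'a list \<Rightarrow> nat" where
  "cnt R xs = card {j. j + 1 < length xs \<and> R (xs ! j) (xs ! (j + 1))}"

lemma cnt_Nil [simp]: "cnt R [] = 0" by (simp add: cnt_def)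
lemma cnt_single [simp]: "cnt R [x] = 0" by (simp add: cnt_def)
lemma cnt_Cons2: "cnt R (x # y # r) = (if R x y then 1 else 0) + cnt R (y # r)"
proof -
  let ?S = "\<lambda>xs. {j. j + 1 < length xs \<and> R (xs ! j) (xs ! (j + 1))}"
  have eq: "?S (x # y # r) = (if R x y then {0} else {}) \<union> Suc ` ?S (y # r)"
  proof (intro set_eqI iffI)
    fix j assume "j \<in> ?S (x # y # r)"
    then show "j \<in> (if R x y then {0} else {}) \<union> Suc ` ?S (y # r)"
      by (cases j) auto
  qed (auto split: if_splits)
  have fin: "finite (?S xs)" for xs by (rule finite_subset[of _ "{..<length xs}"]) auto
  have c: "card (Suc ` ?S (y # r)) = card (?S (y # r))" by (rule card_image) simp
  show ?thesis
  proof (cases "R x y")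
    case True
    then have e: "?S (x # y # r) = insert 0 (Suc ` ?S (y # r))" using eq by (simp only: if_True insert_is_Un[symmetric])
    have "0 \<notin> Suc ` ?S (y # r)" by blast
    then have "card (insert 0 (Suc ` ?S (y # r))) = Suc (card (Suc ` ?S (y # r)))"
      using finite_imageI[OF fin[of "y # r"], of Suc] by (rule card_insert_disjoint[rotated])
    then have "card (?S (x # y # r)) = Suc (card (?S (y # r)))" using e c by (simp only:)
    then show ?thesis using True unfolding cnt_def by (simp only: if_True)
  next
    case False
    have "?S (x # y # r) = Suc ` ?S (y # r)" using eq False by (simp only: if_False Un_empty_left)
    then have "card (?S (x # y # r)) = card (?S (y # r))" using c by (simp only:)
    then show ?thesis using False unfolding cnt_def by (simp only: if_False add_0)
  qed
qed

lemma cnt_Cons_ge: "cnt R xs \<le> cnt R (x # xs)"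
  by (cases xs) (auto simp: cnt_Cons2)

lemma cnt_tri:
  "cnt (\<noteq>) (a # xs) \<le> (if a \<noteq> x then 1 else 0) + cnt (\<noteq>) (x # xs)"
  by (cases xs) (auto simp: cnt_Cons2)

lemma cnt_filter_aux:
  "cnt (\<noteq>) (a # map f (filter P xs)) \<le> cnt (\<noteq>) (a # map f xs)"
proof (induction xs arbitrary: a)
  case Nil then show ?case by simp
next
  case (Cons x xs)
  show ?case
  proof (cases "P x")
    case True
    then show ?thesis using Cons[of "f x"] by (simp add: cnt_Cons2)
  next
    case False
    have "cnt (\<noteq>) (a # map f (filter P xs)) \<le> cnt (\<noteq>) (a # map f xs)" by (rule Cons)
    also have "\<dots> \<le> (if a \<noteq> f x then 1 else 0) + cnt (\<noteq>) (f x # map f xs)"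
      by (rule cnt_tri)
    finally show ?thesis using False by (simp add: cnt_Cons2)
  qed
qed

lemma cnt_filter: "cnt (\<noteq>) (map f (filter P xs)) \<le> cnt (\<noteq>) (map f xs)"
proof (induction xs)
  case Nil then show ?case by simp
next
  case (Cons x xs)
  show ?case
  proof (cases "P x")
    case True
    then show ?thesis using cnt_filter_aux[of "f x" f P xs] by simp
  next
    case False
    then show ?thesis using Cons cnt_Cons_ge[of "(\<noteq>)" "map f xs" "f x"] by simp
  qed
qed

lemma cnt_odd_parity:
  assumes "sorted_wrt (<) (xs :: nat list)"
  shows "cnt (\<lambda>x y. odd (y - x)) xs = cnt (\<noteq>) (map odd xs)"
  using assms
proof (induction xs rule: induct_list012)
  case (3 x y r)
  then have "x < y" by simp
  then have "odd (y - x) = (odd x \<noteq> odd y)" by presburger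
  then show ?case using 3 by (simp add: cnt_Cons2)
qed simp_all

lemma cnt_adjacent:
  assumes "sorted_wrt (<) (xs :: nat list)"
  shows "card {x \<in> set xs. Suc x \<in> set xs} \<le> cnt (\<lambda>x y. odd (y - x)) xs"
  using assms
proof (induction xs rule: induct_list012)
  case 1 then show ?case by simp
next
  case (2 x) then show ?case by simp
next
  case (3 x y r)
  have xy: "x < y" and yr: "\<forall>z\<in>set r. y < z" and xr: "\<forall>z\<in>set r. x < z" using 3(3) by auto
  have sub: "{z \<in> set (x # y # r). Suc z \<in> set (x # y # r)} \<subseteq>
        (if Suc x = y then {x} else {}) \<union> {z \<in> set (y # r). Suc z \<in> set (y # r)}"
    using xy yr xr by auto
  have "card {z \<in> set (x # y # r). Suc z \<in> set (x # y # r)} \<le>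
        card ((if Suc x = y then {x} else {}) \<union> {z \<in> set (y # r). Suc z \<in> set (y # r)})"
    by (rule card_mono[OF _ sub]) auto
  also have "\<dots> \<le> card (if Suc x = y then {x} else {}) + card {z \<in> set (y # r). Suc z \<in> set (y # r)}"
    by (rule card_Un_le)
  also have "\<dots> \<le> (if Suc x = y then 1 else 0) + cnt (\<lambda>x y. odd (y - x)) (y # r)"
    using 3(2) 3(3) by auto
  also have "\<dots> \<le> cnt (\<lambda>x y. odd (y - x)) (x # y # r)"
    by (auto simp: cnt_Cons2)
  finally show ?case .
qed

lemma sorted_list_of_set_filter:
  assumes "finite S"
  shows "sorted_list_of_set {x \<in> S. P x} = filter P (sorted_list_of_set (S :: 'a::linorder set))"
proof (rule strict_sorted_equal)
  show "sorted_wrt (<) (filter P (sorted_list_of_set S))"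
    by (intro sorted_wrt_filter) simp
  show "sorted_wrt (<) (sorted_list_of_set {x \<in> S. P x})" by simp
  show "set (sorted_list_of_set {x \<in> S. P x}) = set (filter P (sorted_list_of_set S))"
    using assms by auto
qed

lemma sorted_list_of_set_image_mono:
  assumes "finite S" "\<And>x y. x \<in> S \<Longrightarrow> y \<in> S \<Longrightarrow> x < y \<Longrightarrow> f x < f y"
  shows "sorted_list_of_set (f ` S) = map f (sorted_list_of_set (S :: 'a::linorder set))"
proof (rule strict_sorted_equal)
  have ss: "sorted_wrt (<) (sorted_list_of_set S)" by simp
  have sS: "set (sorted_list_of_set S) \<subseteq> S" using assms by simp
  have "sorted_wrt (\<lambda>x y. f x < f y) (sorted_list_of_set S)"
  proof (rule sorted_wrt_mono_rel[OF _ ss])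
    fix x y assume "x \<in> set (sorted_list_of_set S)" "y \<in> set (sorted_list_of_set S)" "x < y"
    then show "f x < f y" using sS assms(2) by blast
  qed
  then show "sorted_wrt (<) (map f (sorted_list_of_set S))"
    unfolding sorted_wrt_map .
  show "sorted_wrt (<) (sorted_list_of_set (f ` S))" by simp
  show "set (sorted_list_of_set (f ` S)) = set (map f (sorted_list_of_set S))"
    using assms by auto
qed


lemma binom_count:
  assumes L: "L > 0"
  shows "real (card {D \<in> Pow {..<L}. real (card D) \<le> 2 * real L / 5}) \<le> 2 ^ L * exp (- real L / 50)"
proof -
  have bin: "binomial_pmf L (1/2) = map_pmf card (pmf_of_set (Pow {..<L}))"
  proof -
    have "binomial_pmf L (1/2) = map_pmf (\<lambda>f. card {x \<in> {..<L}. f x}) (Pi_pmf {..<L} False (\<lambda>_. bernoulli_pmf (1/2)))"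
      by (rule binomial_pmf_altdef') auto
    also have "\<dots> = map_pmf card (map_pmf (\<lambda>b. {x \<in> {..<L}. b x}) (Pi_pmf {..<L} False (\<lambda>_. bernoulli_pmf (1/2))))"
      by (simp add: pmf.map_comp o_def)
    also have "\<dots> = map_pmf card (pmf_of_set (Pow {..<L}))"
      by (subst pmf_of_set_Pow_conv_bernoulli) auto
    finally show ?thesis .
  qed
  have "measure_pmf.prob (binomial_pmf L (1/2)) {x. real x \<le> real L * (1/2) - real L / 10} \<le> exp (-2 * (real L / 10)\<^sup>2 / real L)"
    using binomial_distribution.prob_le[of "1/2" L "real L / 10"] L by (simp add: binomial_distribution_def)
  also have "exp (-2 * (real L / 10)\<^sup>2 / real L) = exp (- real L / 50)"
    using L by (simp add: power2_eq_square field_simps)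
  also have "measure_pmf.prob (binomial_pmf L (1/2)) {x. real x \<le> real L * (1/2) - real L / 10}
     = measure_pmf.prob (pmf_of_set (Pow {..<L})) {D. real (card D) \<le> 2 * real L / 5}"
    unfolding bin by (simp add: measure_map_pmf vimage_def field_simps)
  also have "\<dots> = real (card (Pow {..<L} \<inter> {D. real (card D) \<le> 2 * real L / 5})) / real (card (Pow {..<L::nat}))"
    by (rule measure_pmf_of_set) auto
  also have "Pow {..<L} \<inter> {D. real (card D) \<le> 2 * real L / 5} = {D \<in> Pow {..<L}. real (card D) \<le> 2 * real L / 5}"
    by auto
  finally show ?thesis by (simp add: card_Pow field_simps)
qed


definition pr :: "nat \<Rightarrow> nat" where "pr v = (v + 1) div 2"
definition flipv :: "nat \<Rightarrow> nat" where "flipv v = (if odd v then v + 1 else v - 1)"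
definition fA :: "nat set \<Rightarrow> nat \<Rightarrow> nat" where "fA A v = (if v \<noteq> 0 \<and> pr v \<in> A then flipv v else v)"
definition og :: "nat set \<Rightarrow> nat" where "og t = cnt (\<lambda>x y. odd (y - x)) (sorted_list_of_set t)"
definition S1 :: "nat set \<Rightarrow> nat set" where "S1 t = {x \<in> t. flipv x \<notin> t}"
definition S2 :: "nat set \<Rightarrow> nat set" where "S2 t = {x \<in> t. flipv x \<in> t}"

lemma flipv_pos: "v \<ge> 1 \<Longrightarrow> flipv v \<ge> 1"
  unfolding flipv_def by (simp split: if_split; presburger)
lemma flipv_flipv: "v \<ge> 1 \<Longrightarrow> flipv (flipv v) = v"
  unfolding flipv_def by (simp split: if_split; presburger)
lemma pr_flipv: "v \<ge> 1 \<Longrightarrow> pr (flipv v) = pr v"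
  unfolding flipv_def pr_def by (simp split: if_split; presburger)
lemma odd_flipv: "v \<ge> 1 \<Longrightarrow> odd (flipv v) = even v"
  unfolding flipv_def by (simp split: if_split; presburger)
lemma flipv_neq: "v \<ge> 1 \<Longrightarrow> flipv v \<noteq> v"
  unfolding flipv_def by (simp split: if_split; presburger)
lemma pr_bounds: "v \<ge> 1 \<Longrightarrow> 2 * pr v - 1 \<le> v \<and> v \<le> 2 * pr v"
  by (simp add: pr_def; presburger)
lemma flipv_bounds: "v \<ge> 1 \<Longrightarrow> 2 * pr v - 1 \<le> flipv v \<and> flipv v \<le> 2 * pr v"
  unfolding flipv_def pr_def by (simp split: if_split; presburger)
lemma pr_mono: "x \<le> y \<Longrightarrow> pr x \<le> pr y" by (simp add: pr_def div_le_mono)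

lemma fA_zero [simp]: "fA A 0 = 0" by (simp add: fA_def)
lemma fA_fA [simp]: "fA A (fA A v) = v"
proof (cases "v = 0")
  case False
  then have v1: "v \<ge> 1" by simp
  have "flipv v \<noteq> 0" using flipv_pos[OF v1] by simp
  then show ?thesis using pr_flipv[OF v1] flipv_flipv[OF v1] False by (auto simp: fA_def)
qed (simp add: fA_def)
lemma inj_fA: "inj (fA A)" by (metis fA_fA injI)
lemma pr_fA: "pr (fA A v) = pr v" by (auto simp: fA_def pr_flipv)
lemma fA_pos: "v \<ge> 1 \<Longrightarrow> fA A v \<ge> 1" using flipv_pos[of v] by (auto simp: fA_def)
lemma fA_bounds: "v \<ge> 1 \<Longrightarrow> 2 * pr v - 1 \<le> fA A v \<and> fA A v \<le> 2 * pr v"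
  using pr_bounds flipv_bounds by (auto simp: fA_def)
lemma fA_flipv: "v \<ge> 1 \<Longrightarrow> fA A (flipv v) = flipv (fA A v)"
  using flipv_pos[of v] pr_flipv[of v] flipv_flipv[of v] by (auto simp: fA_def)
lemma odd_fA: "v \<ge> 1 \<Longrightarrow> odd (fA A v) = (odd v \<noteq> (pr v \<in> A))"
  by (auto simp: fA_def odd_flipv)
lemma fA_mono: "x \<ge> 1 \<Longrightarrow> y \<ge> 1 \<Longrightarrow> pr x < pr y \<Longrightarrow> fA A x < fA A y"
  using fA_bounds[of x A] fA_bounds[of y A] by linarith

lemma og_ge_S2:
  assumes "finite t" "0 \<notin> t"
  shows "card (S2 t) \<le> 2 * og t"
proof -
  let ?O = "{x \<in> S2 t. odd x}"
  have "S2 t \<subseteq> ?O \<union> Suc ` ?O"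
  proof
    fix x assume x: "x \<in> S2 t"
    have "x \<in> t" using x by (simp add: S2_def)
    then have "x \<noteq> 0" using assms(2) by metis
    then have x1: "x \<ge> 1" by simp
    show "x \<in> ?O \<union> Suc ` ?O"
    proof (cases "odd x")
      case True then show ?thesis using x by auto
    next
      case False
      then have "flipv x = x - 1" by (simp add: flipv_def)
      moreover have "odd (x - 1)" using False x1 by presburger
      moreover have "flipv (x - 1) = x" using False x1 by (simp add: flipv_def)
      ultimately have "x - 1 \<in> ?O" using x by (auto simp: S2_def)
      moreover have "x = Suc (x - 1)" using x1 by simp
      ultimately show ?thesis by blast
    qed
  qed
  moreover have finO: "finite ?O" using assms(1) by (auto simp: S2_def)
  ultimately have "card (S2 t) \<le> card (?O \<union> Suc ` ?O)" by (intro card_mono) auto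
  also have "\<dots> \<le> card ?O + card (Suc ` ?O)" by (rule card_Un_le)
  also have "\<dots> \<le> 2 * card ?O" using card_image_le[OF finO, of Suc] by simp
  also have "card ?O \<le> card {x \<in> set (sorted_list_of_set t). Suc x \<in> set (sorted_list_of_set t)}"
  proof (rule card_mono)
    show "finite {x \<in> set (sorted_list_of_set t). Suc x \<in> set (sorted_list_of_set t)}" by simp
    show "?O \<subseteq> {x \<in> set (sorted_list_of_set t). Suc x \<in> set (sorted_list_of_set t)}"
      using assms(1) by (auto simp: S2_def flipv_def)
  qed
  also have "\<dots> \<le> og t" unfolding og_def by (rule cnt_adjacent) simp
  finally show ?thesis by simp
qed

lemma og_ge_S1:
  assumes "finite t"
  shows "cnt (\<noteq>) (map odd (sorted_list_of_set (S1 t))) \<le> og t"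
proof -
  have "sorted_list_of_set (S1 t) = filter (\<lambda>x. flipv x \<notin> t) (sorted_list_of_set t)"
    unfolding S1_def by (rule sorted_list_of_set_filter[OF assms])
  then have "cnt (\<noteq>) (map odd (sorted_list_of_set (S1 t))) = cnt (\<noteq>) (map odd (filter (\<lambda>x. flipv x \<notin> t) (sorted_list_of_set t)))"
    by (simp only:)
  also have "\<dots> \<le> cnt (\<noteq>) (map odd (sorted_list_of_set t))"
    by (rule cnt_filter)
  also have "\<dots> = og t" unfolding og_def by (rule cnt_odd_parity[symmetric]) simp
  finally show ?thesis .
qed

lemma S1_image: "0 \<notin> s \<Longrightarrow> S1 (fA A ` s) = fA A ` S1 s"
proof -
  assume s0: "0 \<notin> s"
  have pos: "x \<in> s \<Longrightarrow> x \<ge> 1" for x using s0 by (cases x) auto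
  have "flipv (fA A x) \<in> fA A ` s \<longleftrightarrow> flipv x \<in> s" if "x \<in> s" for x
  proof -
    have "flipv (fA A x) = fA A (flipv x)" using fA_flipv[OF pos[OF that]] by simp
    then show ?thesis using inj_fA[of A] by (auto dest: injD)
  qed
  then show ?thesis unfolding S1_def by auto
qed

lemma S2_image: "0 \<notin> s \<Longrightarrow> S2 (fA A ` s) = fA A ` S2 s"
proof -
  assume s0: "0 \<notin> s"
  have pos: "x \<in> s \<Longrightarrow> x \<ge> 1" for x using s0 by (cases x) auto
  have "flipv (fA A x) \<in> fA A ` s \<longleftrightarrow> flipv x \<in> s" if "x \<in> s" for x
  proof -
    have "flipv (fA A x) = fA A (flipv x)" using fA_flipv[OF pos[OF that]] by simp
    then show ?thesis using inj_fA[of A] by (auto dest: injD)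
  qed
  then show ?thesis unfolding S2_def by auto
qed


lemma same_pair: "x \<ge> 1 \<Longrightarrow> y \<ge> 1 \<Longrightarrow> pr x = pr y \<Longrightarrow> x \<noteq> y \<Longrightarrow> y = flipv x"
  unfolding pr_def flipv_def by (simp split: if_split; presburger)

lemma pow_split:
  assumes "finite M" "U \<subseteq> M"
  shows "card {A \<in> Pow M. Q (A \<inter> U)} = card {B \<in> Pow U. Q B} * 2 ^ card (M - U)"
proof -
  have "bij_betw (\<lambda>(B, C). B \<union> C) ({B \<in> Pow U. Q B} \<times> Pow (M - U)) {A \<in> Pow M. Q (A \<inter> U)}"
  proof (rule bij_betw_byWitness[where f' = "\<lambda>A. (A \<inter> U, A - U)"])
    show "\<forall>a\<in>{B \<in> Pow U. Q B} \<times> Pow (M - U). (\<lambda>A. (A \<inter> U, A - U)) (case a of (B, C) \<Rightarrow> B \<union> C) = a"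
      by auto
    show "\<forall>a'\<in>{A \<in> Pow M. Q (A \<inter> U)}. (case (a' \<inter> U, a' - U) of (B, C) \<Rightarrow> B \<union> C) = a'"
      by auto
    show "(\<lambda>(B, C). B \<union> C) ` ({B \<in> Pow U. Q B} \<times> Pow (M - U)) \<subseteq> {A \<in> Pow M. Q (A \<inter> U)}"
    proof -
      have key: "B \<subseteq> U \<Longrightarrow> C \<subseteq> M - U \<Longrightarrow> (B \<union> C) \<inter> U = B" for B C by auto
      show ?thesis using assms by (auto simp: key)
    qed
    show "(\<lambda>A. (A \<inter> U, A - U)) ` {A \<in> Pow M. Q (A \<inter> U)} \<subseteq> {B \<in> Pow U. Q B} \<times> Pow (M - U)"
      by auto
  qed
  then have "card {A \<in> Pow M. Q (A \<inter> U)} = card ({B \<in> Pow U. Q B} \<times> Pow (M - U))"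
    by (rule bij_betw_same_card[symmetric])
  also have "\<dots> = card {B \<in> Pow U. Q B} * 2 ^ card (M - U)"
    using assms by (simp add: card_cartesian_product card_Pow)
  finally show ?thesis .
qed

lemma bits_inj:
  assumes pos: "\<forall>x\<in>set ws. x \<ge> 1"
  defines "bits \<equiv> \<lambda>B. map (\<lambda>x. odd (fA B x)) ws"
  shows "inj_on (\<lambda>B. ({j. j + 1 < length (bits B) \<and> bits B ! j \<noteq> bits B ! (j + 1)}, bits B ! 0)) (Pow (pr ` set ws))"
proof (rule inj_onI)
  fix B1 B2 assume B1: "B1 \<in> Pow (pr ` set ws)" and B2: "B2 \<in> Pow (pr ` set ws)"
    and eq: "({j. j + 1 < length (bits B1) \<and> bits B1 ! j \<noteq> bits B1 ! (j + 1)}, bits B1 ! 0) =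
             ({j. j + 1 < length (bits B2) \<and> bits B2 ! j \<noteq> bits B2 ! (j + 1)}, bits B2 ! 0)"
  have len: "length (bits B) = length ws" for B by (simp add: bits_def)
  have D: "j + 1 < length ws \<Longrightarrow> (bits B1 ! j \<noteq> bits B1 ! (j + 1)) = (bits B2 ! j \<noteq> bits B2 ! (j + 1))" for j
    using eq len by (simp add: set_eq_iff) (metis len)
  have all: "i < length ws \<Longrightarrow> bits B1 ! i = bits B2 ! i" for i
  proof (induction i)
    case 0 then show ?case using eq by simp
  next
    case (Suc i)
    then have "bits B1 ! i = bits B2 ! i" by simp
    moreover have "(bits B1 ! i \<noteq> bits B1 ! (i + 1)) = (bits B2 ! i \<noteq> bits B2 ! (i + 1))"
      using D[of i] Suc.prems by simp
    ultimately show ?case by simp argo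
  qed
  have mem: "(pr x \<in> B1) = (pr x \<in> B2)" if x: "x \<in> set ws" for x
  proof -
    obtain i where i: "i < length ws" "ws ! i = x" using x by (auto simp: in_set_conv_nth)
    have "bits B1 ! i = bits B2 ! i" by (rule all[OF i(1)])
    then have "odd (fA B1 x) = odd (fA B2 x)" using i by (simp add: bits_def)
    then show ?thesis using odd_fA[of x B1] odd_fA[of x B2] pos x by auto
  qed
  show "B1 = B2" using B1 B2 mem by blast
qed


lemma core:
  assumes fin: "finite s" and s0: "0 \<notin> s" and cs: "card s = n" and n10: "10 \<le> n"
    and finM: "finite M" and prM: "pr ` s \<subseteq> M"
  shows "real (card {A \<in> Pow M. real (og (fA A ` s)) \<le> real n / 5}) \<le> exp (- real n / 100) * 2 ^ card M"
proof -
  define G where "G = {A \<in> Pow M. real (og (fA A ` s)) \<le> real n / 5}"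
  have pos: "x \<in> s \<Longrightarrow> x \<ge> 1" for x using s0 by (cases x) auto
  have t0: "0 \<notin> fA A ` s" for A
  proof
    assume "0 \<in> fA A ` s"
    then obtain x where "x \<in> s" "fA A x = 0" by auto
    then have "x = fA A 0" by (metis fA_fA)
    then show False using \<open>x \<in> s\<close> s0 by simp
  qed
  have fint: "finite (fA A ` s)" for A using fin by simp
  have S12: "s = S1 s \<union> S2 s" "S1 s \<inter> S2 s = {}" by (auto simp: S1_def S2_def)
  have finS1: "finite (S1 s)" and finS2: "finite (S2 s)" using fin by (auto simp: S1_def S2_def)
  have ncard: "n = card (S1 s) + card (S2 s)"
    using card_Un_disjoint[OF finS1 finS2 S12(2)] S12(1) cs by simp
  have S2card: "card (S2 (fA A ` s)) = card (S2 s)" for A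
    unfolding S2_image[OF s0] by (rule card_image) (rule inj_on_subset[OF inj_fA], simp)
  have S2og: "card (S2 s) \<le> 2 * og (fA A ` s)" for A
    using og_ge_S2[OF fint t0, of A] S2card[of A] by simp
  show ?thesis
  proof (cases "5 * card (S2 s) > 2 * n")
    case True
    have "G = {}"
    proof (rule ccontr)
      assume "G \<noteq> {}"
      then obtain A where "real (og (fA A ` s)) \<le> real n / 5" unfolding G_def by auto
      then have "5 * og (fA A ` s) \<le> n" by linarith
      then show False using S2og[of A] True by linarith
    qed
    then show ?thesis unfolding G_def[symmetric] by simp
  next
    case False
    define u where "u = card (S1 s)"
    define L where "L = u - 1"
    have u35: "5 * u \<ge> 3 * n" using False ncard unfolding u_def by linarith
    have u1: "u \<ge> 1" using u35 n10 by linarith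
    have Lu: "u = Suc L" using u1 unfolding L_def by simp
    have Ln: "2 * L \<ge> n" using u35 n10 unfolding L_def by linarith
    have L0: "L > 0" using Ln n10 by linarith
    define ws where "ws = sorted_list_of_set (S1 s)"
    have setws: "set ws = S1 s" unfolding ws_def using finS1 by simp
    have lenws: "length ws = u" unfolding ws_def u_def by simp
    have wspos: "\<forall>x\<in>set ws. x \<ge> 1" using setws pos by (auto simp: S1_def)
    define bits where "bits = (\<lambda>B. map (\<lambda>x. odd (fA B x)) ws)"
    define U where "U = pr ` S1 s"
    have UM: "U \<subseteq> M" using prM unfolding U_def S1_def by auto
    have injpr: "inj_on pr (S1 s)"
    proof (rule inj_onI)
      fix x y assume x: "x \<in> S1 s" and y: "y \<in> S1 s" and p: "pr x = pr y"
      show "x = y"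
      proof (rule ccontr)
        assume "x \<noteq> y"
        then have "y = flipv x" using same_pair[of x y] p pos x y by (auto simp: S1_def)
        then show False using x y by (auto simp: S1_def)
      qed
    qed
    have cardU: "card U = u" unfolding U_def u_def by (rule card_image[OF injpr])
    have mono_S1: "fA A x < fA A y" if "x \<in> S1 s" "y \<in> S1 s" "x < y" for A x y
    proof -
      have "pr x \<le> pr y" using that by (simp add: pr_mono)
      moreover have "pr x \<noteq> pr y" using injpr that by (auto dest: inj_onD)
      ultimately show ?thesis using fA_mono[of x y A] pos that by (auto simp: S1_def)
    qed
    have cnt_og: "cnt (\<noteq>) (bits A) \<le> og (fA A ` s)" for A
    proof -
      have "sorted_list_of_set (S1 (fA A ` s)) = map (fA A) ws"
        unfolding S1_image[OF s0] ws_def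
        by (rule sorted_list_of_set_image_mono[OF finS1 mono_S1])
      then have "cnt (\<noteq>) (map odd (sorted_list_of_set (S1 (fA A ` s)))) = cnt (\<noteq>) (bits A)"
        unfolding bits_def by (simp add: o_def)
      then show ?thesis using og_ge_S1[OF fint, of A] by simp
    qed
    have bitsU: "bits A = bits (A \<inter> U)" for A
      unfolding bits_def
    proof (rule map_cong[OF refl])
      fix x assume x: "x \<in> set ws"
      then have "x \<ge> 1" "pr x \<in> U" using wspos setws unfolding U_def by auto
      then show "odd (fA A x) = odd (fA (A \<inter> U) x)" using odd_fA by simp
    qed
    define Q where "Q = (\<lambda>B. real (cnt (\<noteq>) (bits B)) \<le> 2 * real L / 5)"
    have GQ: "G \<subseteq> {A \<in> Pow M. Q (A \<inter> U)}"
    proof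
      fix A assume "A \<in> G"
      then have "A \<in> Pow M" "real (og (fA A ` s)) \<le> real n / 5" unfolding G_def by auto
      moreover have "real n / 5 \<le> 2 * real L / 5" using Ln by simp
      ultimately show "A \<in> {A \<in> Pow M. Q (A \<inter> U)}"
        using cnt_og[of A] bitsU[of A] unfolding Q_def by force
    qed
    have cG: "card G \<le> card {A \<in> Pow M. Q (A \<inter> U)}"
      by (rule card_mono[OF _ GQ]) (use finM in simp)
    have split: "card {A \<in> Pow M. Q (A \<inter> U)} = card {B \<in> Pow U. Q B} * 2 ^ card (M - U)"
      by (rule pow_split[OF finM UM])
    define Dset where "Dset = (\<lambda>B. {j. j + 1 < length (bits B) \<and> bits B ! j \<noteq> bits B ! (j + 1)})"
    have inj: "inj_on (\<lambda>B. (Dset B, bits B ! 0)) (Pow U)"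
      using bits_inj[OF wspos] unfolding Dset_def bits_def U_def setws by simp
    have lenbits: "length (bits B) = Suc L" for B unfolding bits_def using lenws Lu by simp
    have img: "(\<lambda>B. (Dset B, bits B ! 0)) ` {B \<in> Pow U. Q B} \<subseteq>
               {D \<in> Pow {..<L}. real (card D) \<le> 2 * real L / 5} \<times> UNIV"
    proof (rule image_subsetI)
      fix B assume "B \<in> {B \<in> Pow U. Q B}"
      then have "Q B" by simp
      have "Dset B \<subseteq> {..<L}" unfolding Dset_def using lenbits by auto
      moreover have "card (Dset B) = cnt (\<noteq>) (bits B)" unfolding Dset_def cnt_def by simp
      ultimately show "(Dset B, bits B ! 0) \<in> {D \<in> Pow {..<L}. real (card D) \<le> 2 * real L / 5} \<times> UNIV"
        using \<open>Q B\<close> unfolding Q_def by simp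
    qed
    have "card {B \<in> Pow U. Q B} \<le> card ({D \<in> Pow {..<L}. real (card D) \<le> 2 * real L / 5} \<times> (UNIV :: bool set))"
      by (rule card_inj_on_le[OF inj_on_subset[OF inj] img]) auto
    also have "\<dots> = 2 * card {D \<in> Pow {..<L}. real (card D) \<le> 2 * real L / 5}"
      by (simp add: card_cartesian_product)
    finally have cQ: "real (card {B \<in> Pow U. Q B}) \<le> 2 * (2 ^ L * exp (- real L / 50))"
      using binom_count[OF L0] by linarith
    have cMU: "card (M - U) = card M - u" using card_Diff_subset[OF finite_subset[OF UM finM] UM] cardU by simp
    have uM: "u \<le> card M" using card_mono[OF finM UM] cardU by simp
    have "card G \<le> card {B \<in> Pow U. Q B} * 2 ^ card (M - U)" using cG split by simp
    then have "real (card G) \<le> real (card {B \<in> Pow U. Q B} * 2 ^ card (M - U))" by (simp only: of_nat_le_iff)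
    then have "real (card G) \<le> real (card {B \<in> Pow U. Q B}) * 2 ^ card (M - U)" by simp
    also have "\<dots> \<le> 2 * (2 ^ L * exp (- real L / 50)) * 2 ^ card (M - U)"
      using cQ by (intro mult_right_mono) auto
    also have "\<dots> = exp (- real L / 50) * 2 ^ (Suc L + card (M - U))"
      by (simp add: power_add)
    also have "Suc L + card (M - U) = card M" using cMU uM Lu by simp
    also have "exp (- real L / 50) \<le> exp (- real n / 100)" using Ln by simp
    finally show ?thesis unfolding G_def by simp
  qed
qed


lemma pj_fA: "pj \<gamma> (fA A k) = pj \<gamma> k"
proof -
  have "fA A k = 0 \<longleftrightarrow> k = 0" by (metis fA_fA fA_zero)
  moreover have "(fA A k + 1) div 2 = (k + 1) div 2" using pr_fA[of A k] by (simp add: pr_def)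
  ultimately show ?thesis by (simp add: pj_def)
qed

lemma zdist_fA:
  assumes g1: "1 < \<gamma>"
  shows "map_pmf (fA A) (zdist \<gamma>) = zdist \<gamma>"
proof (rule pmf_eqI)
  fix k
  have "pmf (map_pmf (fA A) (zdist \<gamma>)) (fA A (fA A k)) = pmf (zdist \<gamma>) (fA A k)"
    by (rule pmf_map_inj'[OF inj_fA])
  then show "pmf (map_pmf (fA A) (zdist \<gamma>)) k = pmf (zdist \<gamma>) k"
    by (simp add: pmf_zdist[OF g1] pj_fA)
qed

lemma sample_fA:
  assumes g1: "1 < \<gamma>"
  shows "map_pmf (\<lambda>X. fA A \<circ> X) (sample \<gamma> \<theta>) = sample \<gamma> \<theta>"
proof -
  have "Pi_pmf {..<\<theta>} 0 (\<lambda>_. map_pmf (fA A) (zdist \<gamma>)) = map_pmf (\<lambda>h. fA A \<circ> h) (Pi_pmf {..<\<theta>} 0 (\<lambda>_. zdist \<gamma>))"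
    by (rule Pi_pmf_map) auto
  then show ?thesis unfolding sample_def zdist_fA[OF g1] by simp
qed

lemma sample_fA_prob:
  assumes g1: "1 < \<gamma>"
  shows "measure_pmf.prob (sample \<gamma> \<theta>) {X. fA A \<circ> X \<in> Q} = measure_pmf.prob (sample \<gamma> \<theta>) Q"
proof -
  have "measure_pmf.prob (sample \<gamma> \<theta>) {X. fA A \<circ> X \<in> Q} = measure_pmf.prob (map_pmf (\<lambda>X. fA A \<circ> X) (sample \<gamma> \<theta>)) Q"
    by (simp add: measure_map_pmf vimage_def)
  then show ?thesis using sample_fA[OF g1] by simp
qed

lemma valset_fA: "valset \<theta> (fA A \<circ> X) = fA A ` valset \<theta> X"
  by (simp add: valset_def image_comp)

lemma oddgaps_og: "oddgaps \<theta> X = og (valset \<theta> X)"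
  by (simp add: oddgaps_def og_def cnt_def Let_def)

lemma Nval_fA: "Nval \<theta> (fA A \<circ> X) = Nval \<theta> X"
  unfolding Nval_def valset_fA by (rule card_image) (rule inj_on_subset[OF inj_fA], simp)

lemma fA_range: "v \<in> {1..2*m} \<Longrightarrow> fA A v \<in> {1..2*m}"
proof -
  assume v: "v \<in> {1..2*m}"
  then have "pr v \<le> m" unfolding pr_def by auto
  then show ?thesis using fA_bounds[of v A] fA_pos[of v A] v by auto
qed

lemma pr_range: "v \<in> {1..2*m} \<Longrightarrow> pr v \<in> {1..m}"
  unfolding pr_def by auto


context
  fixes \<gamma> :: real
  assumes g1: "1 < \<gamma>"
begin

lemma part3_bounded:
  fixes \<theta> m n :: nat
  assumes n10: "10 \<le> n"
  defines "Qm \<equiv> {X. real (oddgaps \<theta> X) \<le> real n / 5 \<and> Nval \<theta> X = n \<and> valset \<theta> X \<subseteq> {1..2*m}}"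
  shows "measure_pmf.prob (sample \<gamma> \<theta>) Qm \<le> exp (- real n / 100) * measure_pmf.prob (sample \<gamma> \<theta>) {X. Nval \<theta> X = n}"
proof -
  define p where "p = sample \<gamma> \<theta>"
  define M where "M = {1..m}"
  define c where "c = exp (- real n / 100) * 2 ^ m"
  have finM: "finite M" and cardM: "card M = m" unfolding M_def by auto
  have inv: "measure_pmf.prob p {X. fA A \<circ> X \<in> Qm} = measure_pmf.prob p Qm" for A
    unfolding p_def by (rule sample_fA_prob[OF g1])
  have pw: "(\<Sum>A\<in>Pow M. indicator {X. fA A \<circ> X \<in> Qm} X) \<le> c * indicator {X. Nval \<theta> X = n} X" for X
  proof -
    have "(\<Sum>A\<in>Pow M. indicator {X. fA A \<circ> X \<in> Qm} X :: real) = (\<Sum>A\<in>{A \<in> Pow M. fA A \<circ> X \<in> Qm}. 1)"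
      using finM by (simp add: indicator_def sum.If_cases Int_def)
    also have "\<dots> = real (card {A \<in> Pow M. fA A \<circ> X \<in> Qm})" by simp
    finally have e: "(\<Sum>A\<in>Pow M. indicator {X. fA A \<circ> X \<in> Qm} X :: real) = real (card {A \<in> Pow M. fA A \<circ> X \<in> Qm})" .
    show ?thesis
    proof (cases "{A \<in> Pow M. fA A \<circ> X \<in> Qm} = {}")
      case True
      then show ?thesis using e by (simp add: c_def indicator_def)
    next
      case False
      then obtain A0 where A0: "A0 \<in> Pow M" "fA A0 \<circ> X \<in> Qm" by auto
      define s where "s = valset \<theta> X"
      have Nn: "Nval \<theta> X = n" using A0 Nval_fA[of \<theta> A0 X] unfolding Qm_def by simp
      have im: "fA A0 ` s \<subseteq> {1..2*m}" using A0 unfolding Qm_def s_def by (simp add: valset_fA)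
      have s2m: "s \<subseteq> {1..2*m}"
      proof
        fix v assume "v \<in> s"
        then have "fA A0 v \<in> {1..2*m}" using im by blast
        then have "fA A0 (fA A0 v) \<in> {1..2*m}" by (rule fA_range)
        then show "v \<in> {1..2*m}" by simp
      qed
      have fins: "finite s" unfolding s_def valset_def by simp
      have s0: "0 \<notin> s" using s2m by auto
      have cs: "card s = n" using Nn unfolding s_def Nval_def by simp
      have prM: "pr ` s \<subseteq> M" using s2m pr_range unfolding M_def by blast
      have sub: "{A \<in> Pow M. fA A \<circ> X \<in> Qm} \<subseteq> {A \<in> Pow M. real (og (fA A ` s)) \<le> real n / 5}"
        unfolding Qm_def s_def by (auto simp: oddgaps_og valset_fA)
      have "real (card {A \<in> Pow M. fA A \<circ> X \<in> Qm}) \<le> real (card {A \<in> Pow M. real (og (fA A ` s)) \<le> real n / 5})"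
        using card_mono[OF _ sub] finM by simp
      also have "\<dots> \<le> exp (- real n / 100) * 2 ^ card M"
        by (rule core[OF fins s0 cs n10 finM prM])
      finally show ?thesis using e Nn cardM by (simp add: c_def)
    qed
  qed
  have "2 ^ m * measure_pmf.prob p Qm = (\<Sum>A\<in>Pow M. measure_pmf.prob p {X. fA A \<circ> X \<in> Qm})"
    using inv finM cardM by (simp add: card_Pow)
  also have "\<dots> = measure_pmf.expectation p (\<lambda>X. \<Sum>A\<in>Pow M. indicator {X. fA A \<circ> X \<in> Qm} X)"
    by simp
  also have "\<dots> \<le> measure_pmf.expectation p (\<lambda>X. c * indicator {X. Nval \<theta> X = n} X)"
  proof (rule integral_mono)
    show "integrable (measure_pmf p) (\<lambda>X. \<Sum>A\<in>Pow M. indicator {X. fA A \<circ> X \<in> Qm} X :: real)"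
      by (rule Bochner_Integration.integrable_sum) simp
    show "integrable (measure_pmf p) (\<lambda>X. c * indicator {X. Nval \<theta> X = n} X)" by simp
  qed (rule pw)
  also have "\<dots> = c * measure_pmf.prob p {X. Nval \<theta> X = n}" by simp
  finally have "2 ^ m * measure_pmf.prob p Qm \<le> 2 ^ m * (exp (- real n / 100) * measure_pmf.prob p {X. Nval \<theta> X = n})"
    by (simp add: c_def mult_ac)
  then show ?thesis unfolding p_def by simp
qed

lemma prob_some_zero: "measure_pmf.prob (sample \<gamma> \<theta>) {X. \<exists>i<\<theta>. X i = 0} = 0"
proof -
  have "{X::nat\<Rightarrow>nat. \<exists>i<\<theta>. X i = 0} = (\<Union>i\<in>{..<\<theta>}. {X. X i \<in> {0}})" by auto
  then have "measure_pmf.prob (sample \<gamma> \<theta>) {X. \<exists>i<\<theta>. X i = 0}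
     \<le> (\<Sum>i\<in>{..<\<theta>}. measure_pmf.prob (sample \<gamma> \<theta>) {X. X i \<in> {0}})"
    by (simp only:) (rule measure_pmf.finite_measure_subadditive_finite, auto)
  also have "\<dots> = (\<Sum>i\<in>{..<\<theta>}. measure_pmf.prob (zdist \<gamma>) {0})"
    by (intro sum.cong refl sample_prob_component) auto
  also have "\<dots> = 0" by (simp add: measure_measure_pmf_finite pmf_zdist[OF g1] pj_def)
  finally show ?thesis by (simp add: measure_nonneg antisym)
qed

lemma part3:
  assumes n10: "10 \<le> n"
  shows "measure_pmf.prob (sample \<gamma> \<theta>) {X. real (oddgaps \<theta> X) \<le> real n / 5 \<and> Nval \<theta> X = n}
           / measure_pmf.prob (sample \<gamma> \<theta>) {X. Nval \<theta> X = n} \<le> exp (- real n / 100)"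
proof -
  define P where "P = measure_pmf.prob (sample \<gamma> \<theta>)"
  define E where "E = {X. real (oddgaps \<theta> X) \<le> real n / 5 \<and> Nval \<theta> X = n}"
  define K where "K = exp (- real n / 100) * P {X. Nval \<theta> X = n}"
  define B where "B = real \<theta> * (Czeta \<gamma> / (\<gamma> - 1))"
  have bound: "P E \<le> K + B * real (Suc m) powr (1 - \<gamma>)" for m
  proof -
    let ?m = "Suc m"
    define Qm where "Qm = {X. real (oddgaps \<theta> X) \<le> real n / 5 \<and> Nval \<theta> X = n \<and> valset \<theta> X \<subseteq> {1..2*?m}}"
    have "E \<subseteq> Qm \<union> {X. \<exists>i<\<theta>. 2 * ?m < X i} \<union> {X. \<exists>i<\<theta>. X i = 0}"
    proof
      fix X assume X: "X \<in> E"
      show "X \<in> Qm \<union> {X. \<exists>i<\<theta>. 2 * ?m < X i} \<union> {X. \<exists>i<\<theta>. X i = 0}"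
      proof (cases "\<forall>i<\<theta>. X i \<in> {1..2*?m}")
        case True
        then have "valset \<theta> X \<subseteq> {1..2*?m}" unfolding valset_def by auto
        then show ?thesis using X unfolding E_def Qm_def by auto
      next
        case False
        then obtain i where "i < \<theta>" "X i \<notin> {1..2*?m}" by auto
        then show ?thesis by (cases "X i = 0") auto
      qed
    qed
    then have "P E \<le> P (Qm \<union> {X. \<exists>i<\<theta>. 2 * ?m < X i} \<union> {X. \<exists>i<\<theta>. X i = 0})"
      unfolding P_def by (rule measure_pmf.finite_measure_mono) simp
    also have "\<dots> \<le> P Qm + P {X. \<exists>i<\<theta>. 2 * ?m < X i} + P {X. \<exists>i<\<theta>. X i = 0}"
    proof -
      have a: "P (Qm \<union> {X. \<exists>i<\<theta>. 2 * ?m < X i} \<union> {X. \<exists>i<\<theta>. X i = 0}) \<le>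
          P (Qm \<union> {X. \<exists>i<\<theta>. 2 * ?m < X i}) + P {X. \<exists>i<\<theta>. X i = 0}"
        unfolding P_def by (rule measure_subadditive) (auto simp: measure_pmf.emeasure_finite)
      have b: "P (Qm \<union> {X. \<exists>i<\<theta>. 2 * ?m < X i}) \<le> P Qm + P {X. \<exists>i<\<theta>. 2 * ?m < X i}"
        unfolding P_def by (rule measure_subadditive) (auto simp: measure_pmf.emeasure_finite)
      show ?thesis using a b by linarith
    qed
    also have "P {X. \<exists>i<\<theta>. X i = 0} = 0" unfolding P_def by (rule prob_some_zero)
    also have "P Qm \<le> K" unfolding P_def K_def Qm_def by (rule part3_bounded[OF n10])
    also have "P {X. \<exists>i<\<theta>. 2 * ?m < X i} \<le> B * real ?m powr (1 - \<gamma>)"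
      using prob_some_large[OF g1, of "2 * ?m" \<theta>] unfolding P_def B_def by simp
    finally show ?thesis by simp
  qed
  have lim: "(\<lambda>m. K + B * real (Suc m) powr (1 - \<gamma>)) \<longlonglongrightarrow> K + B * 0"
  proof (intro tendsto_add tendsto_const tendsto_mult)
    have "filterlim (\<lambda>m. real (Suc m)) at_top sequentially" by real_asymp
    then show "(\<lambda>m. real (Suc m) powr (1 - \<gamma>)) \<longlonglongrightarrow> 0"
      using g1 by (intro tendsto_neg_powr) auto
  qed
  have "P E \<le> K" using LIMSEQ_le_const[OF lim] bound by simp
  have nn: "P {X. Nval \<theta> X = n} \<ge> 0" unfolding P_def by (rule measure_nonneg)
  show ?thesis
  proof (cases "P {X. Nval \<theta> X = n} = 0")
    case True
    then show ?thesis unfolding P_def E_def by simp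
  next
    case False
    then have "P {X. Nval \<theta> X = n} > 0" using nn by simp
    then show ?thesis using \<open>P E \<le> K\<close> unfolding K_def
      by (simp add: pos_divide_le_eq P_def E_def mult.commute)
  qed
qed

end

theorem lemma5p6:
  fixes \<gamma> :: real and \<theta> :: nat
  assumes "1 < \<gamma>" "\<gamma> < 2" "1 \<le> \<theta>"
  defines "c1 \<equiv> (1 - exp (- Czeta \<gamma>)) / 2"
      and "c2 \<equiv> Czeta \<gamma> / (\<gamma> - 1)"
      and "P \<equiv> measure (measure_pmf (sample \<gamma> \<theta>))"
  shows "(P {X. real (Nval \<theta> X) \<ge> c1 * real \<theta> powr (1 / \<gamma>)}
           \<ge> 1 - c1 powr (-2) * real \<theta> powr (- (2 / \<gamma> - 1))) \<and>
         (\<forall>n::nat. 2 \<le> n \<longrightarrow>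
           P {X. Max (valset \<theta> X) \<le> n}
             \<ge> 1 - c2 * real \<theta> * real (n div 2) powr (1 - \<gamma>)) \<and>
         (\<forall>n::nat. 10 \<le> n \<and> n \<le> \<theta> \<longrightarrow>
           P {X. real (oddgaps \<theta> X) \<le> real n / 5 \<and> Nval \<theta> X = n}
             / P {X. Nval \<theta> X = n} \<le> exp (- real n / 100))"
proof (intro conjI allI impI)
  show "P {X. real (Nval \<theta> X) \<ge> c1 * real \<theta> powr (1 / \<gamma>)}
           \<ge> 1 - c1 powr (-2) * real \<theta> powr (- (2 / \<gamma> - 1))"
    unfolding P_def c1_def by (rule part1[OF assms(1) assms(3)])
next
  fix n :: nat assume "2 \<le> n"
  then show "P {X. Max (valset \<theta> X) \<le> n} \<ge> 1 - c2 * real \<theta> * real (n div 2) powr (1 - \<gamma>)"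
    unfolding P_def c2_def by (rule part2[OF assms(1) assms(3)])
next
  fix n :: nat assume "10 \<le> n \<and> n \<le> \<theta>"
  then have "10 \<le> n" by simp
  then show "P {X. real (oddgaps \<theta> X) \<le> real n / 5 \<and> Nval \<theta> X = n}
             / P {X. Nval \<theta> X = n} \<le> exp (- real n / 100)"
    unfolding P_def by (rule part3[OF assms(1)])
qed

end
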